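(* Suppose $p_{XY}$ has full support on $\mathcal{X}\times\mathcal{Y}$, and let $p(u,x,y,z)=p_{XY}(x,y)p_{Z|XY}(z|x,y)p(u|x,y,z)$ be a joint p.m.f. (with $U$ on a finite set $\mathcal{U}$) satisfying the Markov chains $U-X-Y$, $Z-(U,Y)-X$ and $U-(Y,Z)-X$. For $y\in\mathcal{Y}$ and $i\in[k(y)]$ let $\mathcal{U}_i^{(y)}=\{u\in\mathcal{U}: p(u,z|y)>0\text{ for some }z\in\mathcal{Z}_i^{(y)}\}$. Then for any $y,y'\in\mathcal{Y}$, $i\in[k(y)]$, $j\in[k(y')]$: if $\vec\alpha_i^{(y)}\neq\vec\alpha_j^{(y')}$, then $\mathcal{U}_i^{(y)}\cap\mathcal{U}_j^{(y')}=\emptyset$.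
   Context: $\mathcal{X},\mathcal{Y},\mathcal{Z}$ are finite. For $y\in\mathcal{Y}$ let $\mathcal{Z}^{(y)}=\{z\in\mathcal{Z}:\exists x,\ p_{Z|XY}(z|x,y)>0\}$. For $z,z'\in\mathcal{Z}^{(y)}$, write $z\equiv_y z'$ if the column vectors $(p_{Z|XY}(z|x,y))_{x\in\mathcal{X}}$ and $(p_{Z|XY}(z'|x,y))_{x\in\mathcal{X}}$ are positive scalar multiples of each other; this is an equivalence relation partitioning $\mathcal{Z}^{(y)}=\mathcal{Z}_1^{(y)}\uplus\cdots\uplus\mathcal{Z}_{k(y)}^{(y)}$. For each class, the $|\mathcal{X}|\times|\mathcal{Z}_i^{(y)}|$ matrix $A_i^{(y)}(x,z)=p_{Z|XY}(z|x,y)$ is rank one and can be uniquely written as $A_i^{(y)}(x,z)=\vec\alpha_i^{(y)}(x)\vec\gamma_i^{(y)}(z)$ with $\vec\alpha_i^{(y)}$ a probability vector on $\mathcal{X}$ (nonnegative entries summing to one). $[k]=\{1,\dots,k\}$. *)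

theory Defs
  imports Complex_Main
begin

text \<open>Channel W z x y = p_{Z|XY}(z|x,y); joint pmf P u x y z = p(u,x,y,z).\<close>

definition Zsupp :: "('z \<Rightarrow> 'x \<Rightarrow> 'y \<Rightarrow> real) \<Rightarrow> 'y \<Rightarrow> 'z set" where
  "Zsupp W y = {z. \<exists>x. W z x y > 0}"

definition zequiv :: "('z \<Rightarrow> 'x \<Rightarrow> 'y \<Rightarrow> real) \<Rightarrow> 'y \<Rightarrow> 'z \<Rightarrow> 'z \<Rightarrow> bool" where
  "zequiv W y z z' \<longleftrightarrow> z \<in> Zsupp W y \<and> z' \<in> Zsupp W y \<and>
     (\<exists>c>0. \<forall>x. W z x y = c * W z' x y)"

definition zclass :: "('z \<Rightarrow> 'x \<Rightarrow> 'y \<Rightarrow> real) \<Rightarrow> 'y \<Rightarrow> 'z \<Rightarrow> 'z set" where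
  "zclass W y z = {z'. zequiv W y z z'}"

text \<open>The probability vector alpha of the rank-one factorisation A(x,z) = alpha(x) gamma(z)
  of the class C (unique normalisation: alpha sums to one).\<close>
definition alpha :: "('z \<Rightarrow> 'x::finite \<Rightarrow> 'y \<Rightarrow> real) \<Rightarrow> 'y \<Rightarrow> 'z set \<Rightarrow> 'x \<Rightarrow> real" where
  "alpha W y C x = (\<Sum>z\<in>C. W z x y) / (\<Sum>x'\<in>UNIV. \<Sum>z\<in>C. W z x' y)"

definition mUXY where "mUXY P u x y = (\<Sum>z\<in>UNIV. P u x y z)"
definition mUX where "mUX P u x = (\<Sum>y\<in>UNIV. \<Sum>z\<in>UNIV. P u x y z)"
definition mUY where "mUY P u y = (\<Sum>x\<in>UNIV. \<Sum>z\<in>UNIV. P u x y z)"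
definition mUYZ where "mUYZ P u y z = (\<Sum>x\<in>UNIV. P u x y z)"
definition mXYZ where "mXYZ P x y z = (\<Sum>u\<in>UNIV. P u x y z)"
definition mXY where "mXY P x y = (\<Sum>u\<in>UNIV. \<Sum>z\<in>UNIV. P u x y z)"
definition mYZ where "mYZ P y z = (\<Sum>u\<in>UNIV. \<Sum>x\<in>UNIV. P u x y z)"
definition mX where "mX P x = (\<Sum>u\<in>UNIV. \<Sum>y\<in>UNIV. \<Sum>z\<in>UNIV. P u x y z)"

text \<open>Markov chains A - B - C in the form p(a,b,c) p(b) = p(a,b) p(b,c).\<close>
definition markov_U_X_Y :: "('u::finite \<Rightarrow> 'x::finite \<Rightarrow> 'y::finite \<Rightarrow> 'z::finite \<Rightarrow> real) \<Rightarrow> bool" where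
  "markov_U_X_Y P \<longleftrightarrow> (\<forall>u x y. mUXY P u x y * mX P x = mUX P u x * mXY P x y)"
definition markov_Z_UY_X :: "('u::finite \<Rightarrow> 'x::finite \<Rightarrow> 'y::finite \<Rightarrow> 'z::finite \<Rightarrow> real) \<Rightarrow> bool" where
  "markov_Z_UY_X P \<longleftrightarrow> (\<forall>u x y z. P u x y z * mUY P u y = mUXY P u x y * mUYZ P u y z)"
definition markov_U_YZ_X :: "('u::finite \<Rightarrow> 'x::finite \<Rightarrow> 'y::finite \<Rightarrow> 'z::finite \<Rightarrow> real) \<Rightarrow> bool" where
  "markov_U_YZ_X P \<longleftrightarrow> (\<forall>u x y z. P u x y z * mYZ P y z = mUYZ P u y z * mXYZ P x y z)"

text \<open>U_i^(y) = {u. p(u,z|y) > 0 for some z in the class}; since p(y) > 0 this is p(u,y,z) > 0.\<close>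
definition Uset :: "('u::finite \<Rightarrow> 'x::finite \<Rightarrow> 'y::finite \<Rightarrow> 'z::finite \<Rightarrow> real) \<Rightarrow> 'y \<Rightarrow> 'z set \<Rightarrow> 'u set" where
  "Uset P y C = {u. \<exists>z\<in>C. mUYZ P u y z / (\<Sum>x\<in>UNIV. mXY P x y) > 0}"

end

theory Submission
  imports Defs
begin

theorem claim1:
  fixes pXY :: "'x::finite \<Rightarrow> 'y::finite \<Rightarrow> real"
    and W :: "'z::finite \<Rightarrow> 'x \<Rightarrow> 'y \<Rightarrow> real"
    and P :: "'u::finite \<Rightarrow> 'x \<Rightarrow> 'y \<Rightarrow> 'z \<Rightarrow> real"
  assumes pXY_pos: "\<And>x y. pXY x y > 0"
    and pXY_sum: "(\<Sum>x\<in>UNIV. \<Sum>y\<in>UNIV. pXY x y) = 1"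
    and W_nonneg: "\<And>z x y. W z x y \<ge> 0"
    and W_sum: "\<And>x y. (\<Sum>z\<in>UNIV. W z x y) = 1"
    and P_nonneg: "\<And>u x y z. P u x y z \<ge> 0"
    and P_marg: "\<And>x y z. (\<Sum>u\<in>UNIV. P u x y z) = pXY x y * W z x y"
    and M1: "markov_U_X_Y P"
    and M2: "markov_Z_UY_X P"
    and M3: "markov_U_YZ_X P"
    and hz: "z \<in> Zsupp W y"
    and hz': "z' \<in> Zsupp W y'"
    and halpha: "alpha W y (zclass W y z) \<noteq> alpha W y' (zclass W y' z')"
  shows "Uset P y (zclass W y z) \<inter> Uset P y' (zclass W y' z') = {}"
proof -
  have L1: "mXYZ P x yy zz = pXY x yy * W zz x yy" for x yy zz
    unfolding mXYZ_def using P_marg by simp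
  have L2: "mXY P x yy = pXY x yy" for x yy
  proof -
    have "mXY P x yy = (\<Sum>zz\<in>UNIV. \<Sum>u\<in>UNIV. P u x yy zz)"
      unfolding mXY_def by (rule sum.swap)
    also have "\<dots> = (\<Sum>zz\<in>UNIV. pXY x yy * W zz x yy)" using P_marg by simp
    also have "\<dots> = pXY x yy" using W_sum by (simp add: sum_distrib_left[symmetric])
    finally show ?thesis .
  qed
  have L3: "mX P x > 0" for x
  proof -
    have "mX P x = (\<Sum>yy\<in>UNIV. mXY P x yy)"
      unfolding mX_def mXY_def by (rule sum.swap)
    also have "\<dots> > 0" using L2 pXY_pos by (simp add: sum_pos)
    finally show ?thesis .
  qed
  have L4: "mUYZ P u yy zz \<le> mYZ P yy zz" for u yy zz
  proof -
    have "mYZ P yy zz = (\<Sum>u\<in>UNIV. mUYZ P u yy zz)" unfolding mYZ_def mUYZ_def by simp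
    moreover have "mUYZ P u' yy zz \<ge> 0" for u' unfolding mUYZ_def using P_nonneg by (simp add: sum_nonneg)
    ultimately show ?thesis by (metis UNIV_I finite member_le_sum)
  qed
  have L5: "mUYZ P u yy zz \<le> mUY P u yy" for u yy zz
  proof -
    have "mUY P u yy = (\<Sum>z2\<in>UNIV. mUYZ P u yy z2)" unfolding mUY_def mUYZ_def by (rule sum.swap)
    moreover have "mUYZ P u yy z2 \<ge> 0" for z2 unfolding mUYZ_def using P_nonneg by (simp add: sum_nonneg)
    ultimately show ?thesis by (metis UNIV_I finite member_le_sum)
  qed
  define f where "f u x = mUX P u x / mX P x" for u x
  have key: "alpha W yy (zclass W yy zz) = (\<lambda>x. f u x / (\<Sum>x'\<in>UNIV. f u x'))"
    if z1C: "z1 \<in> zclass W yy zz" and pos: "mUYZ P u yy z1 > 0" for yy zz z1 u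
  proof -
    have pYZ: "mYZ P yy z1 > 0" using L4[of u yy z1] pos by linarith
    have pUY: "mUY P u yy > 0" using L5[of u yy z1] pos by linarith
    define b where "b = mUY P u yy / mYZ P yy z1"
    have bpos: "b > 0" using pYZ pUY by (simp add: b_def)
    have fx: "f u x = b * W z1 x yy" for x
    proof -
      have e3: "P u x yy z1 * mYZ P yy z1 = mUYZ P u yy z1 * (pXY x yy * W z1 x yy)"
        using M3 L1 unfolding markov_U_YZ_X_def by metis
      have e2: "P u x yy z1 * mUY P u yy = mUXY P u x yy * mUYZ P u yy z1"
        using M2 unfolding markov_Z_UY_X_def by blast
      have e1: "mUXY P u x yy * mX P x = mUX P u x * pXY x yy"
        using M1 L2 unfolding markov_U_X_Y_def by metis
      have a1: "P u x yy z1 = mUYZ P u yy z1 * (pXY x yy * W z1 x yy) / mYZ P yy z1"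
        using e3 pYZ by (simp add: field_simps)
      have a2: "mUXY P u x yy = P u x yy z1 * mUY P u yy / mUYZ P u yy z1"
        using e2 pos by (simp add: field_simps)
      have a3: "mUXY P u x yy = b * pXY x yy * W z1 x yy"
      proof -
        have "mUXY P u x yy = (mUYZ P u yy z1 * (pXY x yy * W z1 x yy) / mYZ P yy z1) * mUY P u yy / mUYZ P u yy z1"
          using a1 a2 by simp
        also have "\<dots> = b * pXY x yy * W z1 x yy" using pos pYZ by (simp add: b_def field_simps)
        finally show ?thesis .
      qed
      have "mUX P u x * pXY x yy = b * W z1 x yy * mX P x * pXY x yy"
        using e1 a3 by (metis mult.commute mult.left_commute)
      hence "mUX P u x = b * W z1 x yy * mX P x" using pXY_pos[of x yy] by simp
      thus ?thesis using L3[of x] by (simp add: f_def)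
    qed
    have zeq1: "zequiv W yy zz z1" using z1C unfolding zclass_def by simp
    then obtain c1 where c1: "c1 > 0" "\<And>x. W zz x yy = c1 * W z1 x yy"
      unfolding zequiv_def by blast
    define k where "k z2 = (SOME c. c > 0 \<and> (\<forall>x. W zz x yy = c * W z2 x yy))" for z2
    have kprop: "k z2 > 0 \<and> (\<forall>x. W zz x yy = k z2 * W z2 x yy)" if "z2 \<in> zclass W yy zz" for z2
    proof -
      from that have "\<exists>c. c > 0 \<and> (\<forall>x. W zz x yy = c * W z2 x yy)"
        unfolding zclass_def zequiv_def by blast
      thus ?thesis unfolding k_def by (rule someI_ex)
    qed
    define C where "C = zclass W yy zz"
    define d where "d = (\<Sum>z2\<in>C. c1 / k z2)"
    have dpos: "d > 0"
    proof -
      have fin: "finite C" by simp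
      have "(\<Sum>z2\<in>C. c1 / k z2) \<ge> c1 / k z1"
        using kprop c1 z1C unfolding C_def
        by (intro member_le_sum) (auto simp: C_def less_imp_le)
      moreover have "c1 / k z1 > 0" using kprop[OF z1C] c1 by simp
      ultimately show ?thesis unfolding d_def by linarith
    qed
    have sumC: "(\<Sum>z2\<in>C. W z2 x yy) = d * W z1 x yy" for x
    proof -
      have "W z2 x yy = c1 / k z2 * W z1 x yy" if "z2 \<in> C" for z2
      proof -
        have "W zz x yy = k z2 * W z2 x yy" "k z2 > 0" using kprop that unfolding C_def by auto
        thus ?thesis using c1(2)[of x] by (simp add: field_simps)
      qed
      hence "(\<Sum>z2\<in>C. W z2 x yy) = (\<Sum>z2\<in>C. c1 / k z2 * W z1 x yy)" by (rule sum.cong[OF refl])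
      thus ?thesis unfolding d_def by (simp add: sum_distrib_right)
    qed
    show ?thesis
    proof
      fix x
      have "alpha W yy C x = d * W z1 x yy / (\<Sum>x'\<in>UNIV. d * W z1 x' yy)"
        unfolding alpha_def sumC by simp
      also have "\<dots> = W z1 x yy / (\<Sum>x'\<in>UNIV. W z1 x' yy)"
        using dpos by (simp add: sum_distrib_left[symmetric])
      also have "\<dots> = b * W z1 x yy / (\<Sum>x'\<in>UNIV. b * W z1 x' yy)"
        using bpos by (simp add: sum_distrib_left[symmetric])
      also have "\<dots> = f u x / (\<Sum>x'\<in>UNIV. f u x')" using fx by simp
      finally show "alpha W yy (zclass W yy zz) x = f u x / (\<Sum>x'\<in>UNIV. f u x')"
        unfolding C_def .
    qed
  qed
  have den: "(\<Sum>x\<in>UNIV. mXY P x yy) > 0" for yy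
    using L2 pXY_pos by (simp add: sum_pos)
  show ?thesis
  proof (rule ccontr)
    assume "Uset P y (zclass W y z) \<inter> Uset P y' (zclass W y' z') \<noteq> {}"
    then obtain u where u1: "u \<in> Uset P y (zclass W y z)" and u2: "u \<in> Uset P y' (zclass W y' z')"
      by blast
    from u1 obtain z1 where z1: "z1 \<in> zclass W y z" "mUYZ P u y z1 / (\<Sum>x\<in>UNIV. mXY P x y) > 0"
      unfolding Uset_def by blast
    from u2 obtain z2 where z2: "z2 \<in> zclass W y' z'" "mUYZ P u y' z2 / (\<Sum>x\<in>UNIV. mXY P x y') > 0"
      unfolding Uset_def by blast
    have p1: "mUYZ P u y z1 > 0" using z1(2) den[of y] by (simp add: zero_less_divide_iff)
    have p2: "mUYZ P u y' z2 > 0" using z2(2) den[of y'] by (simp add: zero_less_divide_iff)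
    show False using key[OF z1(1) p1] key[OF z2(1) p2] halpha by simp
  qed
qed

end
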